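(* Let $n\ge 2$, $N=n(n-1)/2$, $1\le i<j\le n$, $\phi,\alpha\in\mathbb{R}$, and let $U=R(i,j,\phi,\alpha)$. Let $\mathcal{R}=\mathcal{R}_{ij}(U)\in\mathbb{C}^{2N\times 2N}$ be the Jacobi annihilator. Then $\mathcal{R}$ agrees with the identity matrix $I_{2N}$ outside exactly $2n-2$ principal submatrices, which are determined by $$\mathcal{R}_{\tau(i,j),\tau(i,j)}=0,\qquad \mathcal{R}_{\tau(j,i),\tau(j,i)}=0,$$ and, for every $1\le r\le n$ with $r\notin\{i,j\}$, $$\begin{bmatrix}\mathcal{R}_{\tau(r,i),\tau(r,i)} & \mathcal{R}_{\tau(r,i),\tau(r,j)}\\ \mathcal{R}_{\tau(r,j),\tau(r,i)} & \mathcal{R}_{\tau(r,j),\tau(r,j)}\end{bmatrix}=\begin{bmatrix}\cos\phi & e^{-\imath\alpha}\sin\phi\\ -e^{\imath\alpha}\sin\phi & \cos\phi\end{bmatrix},$$ $$\begin{bmatrix}\mathcal{R}_{\tau(i,r),\tau(i,r)} & \mathcal{R}_{\tau(i,r),\tau(j,r)}\\ \mathcal{R}_{\tau(j,r),\tau(i,r)} & \mathcal{R}_{\tau(j,r),\tau(j,r)}\end{bmatrix}=\begin{bmatrix}\cos\phi & e^{\imath\alpha}\sin\phi\\ -e^{-\imath\alpha}\sin\phi & \cos\phi\end{bmatrix}.$$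
   Context: $\imath=\sqrt{-1}$. For $1\le i<j\le n$ and real $\phi,\alpha$, the complex plane rotation $R(i,j,\phi,\alpha)$ is the $n\times n$ matrix equal to $I_n$ except for the entries $(i,i)$ and $(j,j)$, both equal to $\cos\phi$, the entry $(i,j)$ equal to $-e^{\imath\alpha}\sin\phi$, and the entry $(j,i)$ equal to $e^{-\imath\alpha}\sin\phi$. Let $N=n(n-1)/2$. For $A=(a_{st})\in\mathbb{C}^{n\times n}$ and $2\le s,t\le n$ put $c_t=(a_{1t},a_{2t},\dots,a_{t-1,t})^T$ and $r_s=(a_{s1},\dots,a_{s,s-1})$, and define the linear map $\mathrm{ve}:\mathbb{C}^{n\times n}\to\mathbb{C}^{2N}$ by $\mathrm{ve}(A)=[c_2^T,c_3^T,\dots,c_n^T,r_2,r_3,\dots,r_n]^T$. Define $\tau(s,t)=(t-1)(t-2)/2+s$ for $1\le s<t\le n$ and $\tau(s,t)=\tau(t,s)+N$ for $1\le t<s\le n$; thus $\tau(s,t)$ is the position of $a_{st}$ in $\mathrm{ve}(A)$. Let $\nu_{ij}:\mathbb{C}^{n\times n}\to\mathbb{C}^{n\times n}$ be the linear map that sets the entries in positions $(i,j)$ and $(j,i)$ to zero. For $U=R(i,j,\phi,\alpha)$, the Jacobi annihilator $\mathcal{R}_{ij}(U)$ is the unique $2N\times 2N$ matrix with $\mathcal{R}_{ij}(U)\,\mathrm{ve}(A)=\mathrm{ve}(\nu_{ij}(U^*AU))$ for all $A\in\mathbb{C}^{n\times n}$ (well defined since $\mathrm{ve}$ is surjective and $\mathrm{ve}(\nu_{ij}(U^*AU))$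 depends only on the off-diagonal entries of $A$). *)

theory Defs
  imports Complex_Main "Jordan_Normal_Form.Matrix"
begin

text \<open>Conventions: the paper uses 1-based indices. Jordan_Normal_Form matrices and
vectors are 0-based, so the paper's entry (s,t) of a matrix A is A $$ (s-1, t-1) and
the paper's k-th entry of a vector v is v $ (k-1). All definitions below are phrased
with the paper's 1-based indices.\<close>

definition Nn :: "nat \<Rightarrow> nat" where
  "Nn n = n * (n - 1) div 2"

definition ent :: "complex mat \<Rightarrow> nat \<Rightarrow> nat \<Rightarrow> complex" where
  "ent A s t = A $$ (s - 1, t - 1)"

definition rot :: "nat \<Rightarrow> nat \<Rightarrow> nat \<Rightarrow> real \<Rightarrow> real \<Rightarrow> complex mat" where
  "rot n i j \<phi> \<alpha> = mat n n (\<lambda>(a, b). let s = a + 1; t = b + 1 in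
     if s = t then (if s = i \<or> s = j then complex_of_real (cos \<phi>) else 1)
     else if s = i \<and> t = j then - exp (\<i> * complex_of_real \<alpha>) * complex_of_real (sin \<phi>)
     else if s = j \<and> t = i then exp (- \<i> * complex_of_real \<alpha>) * complex_of_real (sin \<phi>)
     else 0)"

definition ctrans :: "complex mat \<Rightarrow> complex mat" where
  "ctrans U = mat (dim_col U) (dim_row U) (\<lambda>(a, b). cnj (U $$ (b, a)))"

text \<open>ve(A) = [c_2^T, ..., c_n^T, r_2, ..., r_n]^T with c_t = (a_{1t},...,a_{t-1,t})^T,
  r_s = (a_{s1},...,a_{s,s-1}).\<close>
definition ve :: "nat \<Rightarrow> complex mat \<Rightarrow> complex vec" where
  "ve n A = vec_of_list
     (concat (map (\<lambda>t. map (\<lambda>s. ent A s t) [1..<t]) [2..<n+1]) @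
      concat (map (\<lambda>s. map (\<lambda>t. ent A s t) [1..<s]) [2..<n+1]))"

text \<open>tau(s,t): 1-based position of a_{st} in ve(A).\<close>
definition tau :: "nat \<Rightarrow> nat \<Rightarrow> nat \<Rightarrow> nat" where
  "tau n s t = (if s < t then (t - 1) * (t - 2) div 2 + s
                else ((s - 1) * (s - 2) div 2 + t) + Nn n)"

definition nu :: "nat \<Rightarrow> nat \<Rightarrow> complex mat \<Rightarrow> complex mat" where
  "nu i j A = mat (dim_row A) (dim_col A) (\<lambda>(a, b).
     if (a + 1 = i \<and> b + 1 = j) \<or> (a + 1 = j \<and> b + 1 = i) then 0 else A $$ (a, b))"

definition jacobi_annihilator :: "nat \<Rightarrow> nat \<Rightarrow> nat \<Rightarrow> complex mat \<Rightarrow> complex mat" where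
  "jacobi_annihilator n i j U = (THE M. M \<in> carrier_mat (2 * Nn n) (2 * Nn n) \<and>
     (\<forall>A \<in> carrier_mat n n. M *\<^sub>v ve n A = ve n (nu i j (ctrans U * A * U))))"

end

theory Submission
  imports Defs
begin

lemma Nn_Suc: "Nn (Suc m) = Nn m + m"
proof -
  have "Suc m * m = m * (m - 1) + 2 * m" by (cases m) (auto simp: algebra_simps)
  then show ?thesis unfolding Nn_def by simp
qed

lemma Nn_mono: "a \<le> b \<Longrightarrow> Nn a \<le> Nn b"
  by (induction b) (auto simp: Nn_Suc le_Suc_eq)

lemma Nn_pred: "Nn (t - 1) = (t - 1) * (t - 2) div 2"
proof -
  have "t - 1 - 1 = t - 2" by (metis diff_diff_left one_add_one)
  then show ?thesis unfolding Nn_def by (simp only:)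
qed

lemma tau_up: "s < t \<Longrightarrow> tau n s t = Nn (t - 1) + s"
  unfolding Nn_pred by (simp add: tau_def)

lemma tau_low: "t < s \<Longrightarrow> tau n s t = Nn (s - 1) + t + Nn n"
  unfolding Nn_pred by (simp add: tau_def)

definition LL :: "(nat \<Rightarrow> nat \<Rightarrow> 'a) \<Rightarrow> nat \<Rightarrow> 'a list" where
  "LL f m = concat (map (\<lambda>t. map (\<lambda>s. f s t) [1..<t]) [2..<m+1])"

lemma LL_Suc: "LL f (Suc m) = LL f m @ map (\<lambda>s. f s (Suc m)) [1..<Suc m]"
  by (cases m) (auto simp: LL_def)

lemma LL_len: "length (LL f m) = Nn m"
  by (induction m) (auto simp: LL_Suc Nn_Suc, simp add: LL_def Nn_def)

lemma LL_nth: "1 \<le> s \<Longrightarrow> s < t \<Longrightarrow> t \<le> m \<Longrightarrow> LL f m ! (Nn (t - 1) + s - 1) = f s t"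
proof (induction m)
  case 0 then show ?case by simp
next
  case (Suc m)
  show ?case
  proof (cases "t = Suc m")
    case True
    have e: "Nn (t - 1) + s - 1 = Nn m + (s - 1)" using Suc.prems True by simp
    have m: "(map (\<lambda>s. f s (Suc m)) [1..<Suc m]) ! (s - 1) = f s (Suc m)"
      using Suc.prems True by (simp del: upt_Suc)
    have L: "LL f (Suc m) ! (Nn m + (s - 1)) = (map (\<lambda>s. f s (Suc m)) [1..<Suc m]) ! (s - 1)"
      by (simp add: LL_Suc nth_append LL_len del: upt_Suc)
    show ?thesis unfolding e using L m True by simp
  next
    case False
    then have "t \<le> m" using Suc.prems by simp
    have "Nn (t - 1) + s - 1 < Nn t" using Suc.prems Nn_Suc[of "t-1"] by simp
    also have "Nn t \<le> Nn m" using \<open>t \<le> m\<close> by (rule Nn_mono)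
    finally show ?thesis using Suc.IH[OF Suc.prems(1,2) \<open>t \<le> m\<close>]
      by (simp add: LL_Suc nth_append LL_len)
  qed
qed

lemma ve_alt: "ve n A = vec_of_list (LL (ent A) n @ LL (\<lambda>x y. ent A y x) n)"
  unfolding ve_def LL_def by simp

lemma dim_ve[simp]: "dim_vec (ve n A) = 2 * Nn n"
  by (simp add: ve_alt LL_len)

definition valid :: "nat \<Rightarrow> nat \<times> nat \<Rightarrow> bool" where
  "valid n x \<longleftrightarrow> 1 \<le> fst x \<and> fst x \<le> n \<and> 1 \<le> snd x \<and> snd x \<le> n \<and> fst x \<noteq> snd x"

lemma tau_range: "valid n (s,t) \<Longrightarrow> 1 \<le> tau n s t \<and> tau n s t \<le> 2 * Nn n"
proof -
  assume v: "valid n (s,t)"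
  show ?thesis
  proof (cases "s < t")
    case True
    have "Nn (t-1) + s \<le> Nn t" using Nn_Suc[of "t-1"] True v by (simp add: valid_def)
    moreover have "Nn t \<le> Nn n" using v by (intro Nn_mono) (simp add: valid_def)
    ultimately show ?thesis using True v by (simp add: tau_up valid_def)
  next
    case False
    then have ts: "t < s" using v by (simp add: valid_def)
    have "Nn (s-1) + t \<le> Nn s" using Nn_Suc[of "s-1"] ts v by (simp add: valid_def)
    moreover have "Nn s \<le> Nn n" using v by (intro Nn_mono) (simp add: valid_def)
    ultimately show ?thesis using ts v by (simp add: tau_low valid_def)
  qed
qed

lemma ve_tau: "valid n (s,t) \<Longrightarrow> ve n A $ (tau n s t - 1) = ent A s t"
proof -
  assume v: "valid n (s,t)"
  show ?thesis
  proof (cases "s < t")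
    case True
    have "Nn (t-1) + s - 1 < Nn t" using Nn_Suc[of "t-1"] True v by (simp add: valid_def; linarith)
    moreover have "Nn t \<le> Nn n" using v by (intro Nn_mono) (simp add: valid_def)
    ultimately show ?thesis using True v LL_nth[of s t n "ent A"]
      by (simp add: tau_up valid_def ve_alt vec_of_list_index nth_append LL_len)
  next
    case False
    then have ts: "t < s" using v by (simp add: valid_def)
    have e: "Nn (s - 1) + t + Nn n - 1 = Nn n + (Nn (s-1) + t - 1)" using v by (simp add: valid_def)
    have "ve n A $ (tau n s t - 1) = (LL (ent A) n @ LL (\<lambda>x y. ent A y x) n) ! (Nn n + (Nn (s-1) + t - 1))"
      by (simp only: tau_low[OF ts] e ve_alt vec_of_list_index)
    also have "\<dots> = LL (\<lambda>x y. ent A y x) n ! (Nn (s-1) + t - 1)" by (simp add: nth_append LL_len)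
    also have "\<dots> = ent A s t" using LL_nth[of t s n "\<lambda>x y. ent A y x"] ts v by (simp add: valid_def)
    finally show ?thesis .
  qed
qed

lemma tau_inj_aux: "1 \<le> s \<Longrightarrow> s < t \<Longrightarrow> 1 \<le> s' \<Longrightarrow> s' < t' \<Longrightarrow> t < t' \<Longrightarrow>
   Nn (t - 1) + s < Nn (t' - 1) + s'"
proof -
  assume a: "1 \<le> s" "s < t" "1 \<le> s'" "s' < t'" "t < t'"
  have "Nn (t-1) + s \<le> Nn t" using Nn_Suc[of "t-1"] a by simp
  also have "Nn t \<le> Nn (t'-1)" using a by (intro Nn_mono) simp
  finally show ?thesis using a by simp
qed

lemma tau_inj_up: "1 \<le> s \<Longrightarrow> s < t \<Longrightarrow> 1 \<le> s' \<Longrightarrow> s' < t' \<Longrightarrow>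
   Nn (t - 1) + s = Nn (t' - 1) + s' \<Longrightarrow> s = s' \<and> t = t'"
  using tau_inj_aux[of s t s' t'] tau_inj_aux[of s' t' s t]
  by (metis add_left_cancel linorder_neqE_nat less_irrefl)

lemma tau_inj: "valid n (s,t) \<Longrightarrow> valid n (s',t') \<Longrightarrow>
   (tau n s t = tau n s' t') = (s = s' \<and> t = t')"
proof
  assume v: "valid n (s,t)" "valid n (s',t')" and e: "tau n s t = tau n s' t'"
  have b1: "s < t \<Longrightarrow> tau n s t \<le> Nn n"
    using Nn_Suc[of "t-1"] Nn_mono[of t n] v by (simp add: tau_up valid_def)
  have b2: "s' < t' \<Longrightarrow> tau n s' t' \<le> Nn n"
    using Nn_Suc[of "t'-1"] Nn_mono[of t' n] v by (simp add: tau_up valid_def)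
  have b3: "t < s \<Longrightarrow> tau n s t > Nn n" using v by (simp add: tau_low valid_def)
  have b4: "t' < s' \<Longrightarrow> tau n s' t' > Nn n" using v by (simp add: tau_low valid_def)
  consider "s < t" "s' < t'" | "t < s" "t' < s'" | "s < t" "t' < s'" | "t < s" "s' < t'"
    using v by (auto simp: valid_def) linarith+
  then show "s = s' \<and> t = t'"
  proof cases
    case 1 then show ?thesis using e v tau_inj_up[of s t s' t'] by (simp add: tau_up valid_def)
  next
    case 2 then show ?thesis using e v tau_inj_up[of t s t' s'] by (simp add: tau_low valid_def)
  next
    case 3 then show ?thesis using e b1 b4 by simp
  next
    case 4 then show ?thesis using e b2 b3 by simp
  qed
qed simp

lemma Nn_surj: "p < Nn m \<Longrightarrow> \<exists>s t. 1 \<le> s \<and> s < t \<and> t \<le> m \<and> p = Nn (t - 1) + s - 1"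
proof (induction m)
  case 0 then show ?case by (simp add: Nn_def)
next
  case (Suc m)
  show ?case
  proof (cases "p < Nn m")
    case True then show ?thesis using Suc.IH by (meson le_SucI)
  next
    case False
    then show ?thesis using Suc.prems
      by (intro exI[of _ "p - Nn m + 1"] exI[of _ "Suc m"]) (auto simp: Nn_Suc)
  qed
qed

lemma tau_surj: "p < 2 * Nn n \<Longrightarrow> \<exists>s t. valid n (s,t) \<and> p = tau n s t - 1"
proof (cases "p < Nn n")
  case True
  then obtain s t where "1 \<le> s" "s < t" "t \<le> n" "p = Nn (t - 1) + s - 1" using Nn_surj by blast
  then show ?thesis by (intro exI[of _ s] exI[of _ t]) (auto simp: valid_def tau_up)
next
  case False
  assume "p < 2 * Nn n"
  then have "p - Nn n < Nn n" using False by simp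
  then obtain s t where "1 \<le> s" "s < t" "t \<le> n" "p - Nn n = Nn (t - 1) + s - 1" using Nn_surj by blast
  then show ?thesis using False by (intro exI[of _ t] exI[of _ s]) (auto simp: valid_def tau_low)
qed

definition pos :: "nat \<Rightarrow> nat \<Rightarrow> nat \<times> nat" where
  "pos n p = (SOME x. valid n x \<and> p = tau n (fst x) (snd x) - 1)"

lemma pos_props: "p < 2 * Nn n \<Longrightarrow> valid n (pos n p) \<and> p = tau n (fst (pos n p)) (snd (pos n p)) - 1"
  unfolding pos_def by (rule someI_ex) (use tau_surj in auto)

lemma pos_tau: "valid n (s,t) \<Longrightarrow> pos n (tau n s t - 1) = (s,t)"
proof -
  assume v: "valid n (s,t)"
  let ?p = "tau n s t - 1"
  have "?p < 2 * Nn n" using tau_range[OF v] by linarith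
  from pos_props[OF this] have "valid n (pos n ?p)" and e: "?p = tau n (fst (pos n ?p)) (snd (pos n ?p)) - 1"
    by auto
  moreover have "tau n (fst (pos n ?p)) (snd (pos n ?p)) \<ge> 1"
    using tau_range[of n "fst (pos n ?p)" "snd (pos n ?p)"] calculation by simp
  moreover have "tau n s t \<ge> 1" using tau_range[OF v] by simp
  ultimately have "tau n s t = tau n (fst (pos n ?p)) (snd (pos n ?p))" by linarith
  then show ?thesis using tau_inj[OF v, of "fst (pos n ?p)" "snd (pos n ?p)"] \<open>valid n (pos n ?p)\<close>
    by (simp add: prod_eq_iff)
qed

lemma ve_pos: "p < 2 * Nn n \<Longrightarrow> ve n A $ p = ent A (fst (pos n p)) (snd (pos n p))"
  using pos_props[of p n] ve_tau[of n "fst (pos n p)" "snd (pos n p)" A] by simp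


lemma rot_carrier: "rot n i j \<phi> \<alpha> \<in> carrier_mat n n"
  by (simp add: rot_def)

lemma ctrans_carrier: "U \<in> carrier_mat n n \<Longrightarrow> ctrans U \<in> carrier_mat n n"
  by (simp add: ctrans_def)

lemma rot_col:
  assumes "1 \<le> i" "i < j" "k < n" "b < n"
  shows "rot n i j \<phi> \<alpha> $$ (k, b) =
    (if b = i - 1 then (if k = i - 1 then complex_of_real (cos \<phi>)
        else if k = j - 1 then exp (- \<i> * complex_of_real \<alpha>) * complex_of_real (sin \<phi>) else 0)
     else if b = j - 1 then (if k = i - 1 then - exp (\<i> * complex_of_real \<alpha>) * complex_of_real (sin \<phi>)
        else if k = j - 1 then complex_of_real (cos \<phi>) else 0)
     else if k = b then 1 else 0)"
  using assms by (auto simp: rot_def Let_def)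

lemma sum_two:
  fixes n :: nat
  assumes "a < n" "b < n" "a \<noteq> b"
  shows "(\<Sum>k<n. f k * (if k = a then c else if k = b then d else 0)) = f a * c + f b * (d::complex)"
proof -
  have "(\<Sum>k<n. f k * (if k = a then c else if k = b then d else 0)) =
        (\<Sum>k<n. (if k = a then f k * c else 0) + (if k = b then f k * d else 0))"
    using assms by (intro sum.cong) auto
  also have "\<dots> = (\<Sum>k<n. if k = a then f k * c else 0) + (\<Sum>k<n. if k = b then f k * d else 0)"
    by (rule sum.distrib)
  also have "\<dots> = f a * c + f b * d" using assms
    by (simp only: sum.delta[OF finite_lessThan] lessThan_iff if_True)
  finally show ?thesis .
qed

lemma sum_two':
  fixes n :: nat
  assumes "a < n" "b < n" "a \<noteq> b"
  shows "(\<Sum>k<n. (if k = a then c else if k = b then d else 0) * f k) = c * f a + d * (f b::complex)"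
  using sum_two[OF assms, of f c d] by (simp add: mult.commute)

lemma sum_one:
  fixes n :: nat
  assumes "a < n"
  shows "(\<Sum>k<n. f k * (if k = a then 1 else 0)) = (f a::complex)"
proof -
  have "(\<Sum>k<n. f k * (if k = a then 1 else 0)) = (\<Sum>k<n. if k = a then f k else 0)"
    by (intro sum.cong) auto
  then show ?thesis using assms by (simp add: sum.delta)
qed

lemma sum_one':
  fixes n :: nat
  assumes "a < n"
  shows "(\<Sum>k<n. (if a = k then 1 else 0) * f k) = (f a::complex)"
proof -
  have "(\<Sum>k<n. (if a = k then 1 else 0) * f k) = (\<Sum>k<n. if k = a then f k else 0)"
    by (intro sum.cong) auto
  then show ?thesis using assms by (simp add: sum.delta)
qed

lemma mult_entry:
  assumes "X \<in> carrier_mat m n" "Y \<in> carrier_mat n p" "a < m" "b < p"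
  shows "(X * Y) $$ (a, b) = (\<Sum>k<n. X $$ (a, k) * Y $$ (k, b))"
  using assms by (simp add: scalar_prod_def lessThan_atLeast0)

abbreviation "Cc \<phi> \<equiv> complex_of_real (cos \<phi>)"
abbreviation "Ss \<phi> \<equiv> complex_of_real (sin \<phi>)"
abbreviation "Ep \<alpha> \<equiv> exp (\<i> * complex_of_real \<alpha>)"
abbreviation "Em \<alpha> \<equiv> exp (- \<i> * complex_of_real \<alpha>)"

lemma RM:
  assumes "1 \<le> i" "i < j" "j \<le> n" "X \<in> carrier_mat m n" "a < m" "b < n"
  shows "(X * rot n i j \<phi> \<alpha>) $$ (a, b) =
    (if b = i - 1 then X $$ (a, i - 1) * Cc \<phi> + X $$ (a, j - 1) * (Em \<alpha> * Ss \<phi>)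
     else if b = j - 1 then X $$ (a, i - 1) * (- Ep \<alpha> * Ss \<phi>) + X $$ (a, j - 1) * Cc \<phi>
     else X $$ (a, b))"
proof -
  have e: "(X * rot n i j \<phi> \<alpha>) $$ (a, b) = (\<Sum>k<n. X $$ (a, k) * rot n i j \<phi> \<alpha> $$ (k, b))"
    using assms by (intro mult_entry[OF assms(4) rot_carrier]) auto
  have ne: "i - 1 \<noteq> j - 1" "i - 1 < n" "j - 1 < n" using assms by auto
  show ?thesis
  proof (cases "b = i - 1")
    case True
    have "(\<Sum>k<n. X $$ (a, k) * rot n i j \<phi> \<alpha> $$ (k, b)) = (\<Sum>k<n. X $$ (a, k) *
      (if k = i - 1 then Cc \<phi> else if k = j - 1 then Em \<alpha> * Ss \<phi> else 0))"
      using assms True by (intro sum.cong refl) (simp add: rot_col)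
    then show ?thesis using e True sum_two[OF ne(2,3,1)] by simp
  next
    case F1: False
    show ?thesis
    proof (cases "b = j - 1")
      case True
      have "(\<Sum>k<n. X $$ (a, k) * rot n i j \<phi> \<alpha> $$ (k, b)) = (\<Sum>k<n. X $$ (a, k) *
        (if k = i - 1 then - Ep \<alpha> * Ss \<phi> else if k = j - 1 then Cc \<phi> else 0))"
        using assms True F1 by (intro sum.cong refl) (simp add: rot_col)
      then show ?thesis using e True F1 sum_two[OF ne(2,3,1)] by simp
    next
      case False
      have "(\<Sum>k<n. X $$ (a, k) * rot n i j \<phi> \<alpha> $$ (k, b)) = (\<Sum>k<n. X $$ (a, k) *
        (if k = b then 1 else 0))"
        using assms False F1 by (intro sum.cong refl) (simp add: rot_col)
      then show ?thesis using e False F1 sum_one[OF assms(6)] by simp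
    qed
  qed
qed

lemma ctrans_rot:
  assumes "1 \<le> i" "i < j" "j \<le> n" "a < n" "k < n"
  shows "ctrans (rot n i j \<phi> \<alpha>) $$ (a, k) =
    (if a = i - 1 then (if k = i - 1 then Cc \<phi> else if k = j - 1 then Ep \<alpha> * Ss \<phi> else 0)
     else if a = j - 1 then (if k = i - 1 then - Em \<alpha> * Ss \<phi> else if k = j - 1 then Cc \<phi> else 0)
     else if a = k then 1 else 0)"
proof -
  have e1: "Ep \<alpha> = cis \<alpha>" "Em \<alpha> = cis (- \<alpha>)" by (simp_all add: cis_conv_exp)
  have c1: "cnj (Em \<alpha>) = Ep \<alpha>" "cnj (Ep \<alpha>) = Em \<alpha>" unfolding e1 by (simp_all add: cis_cnj)
  have c2: "cnj (exp (- (\<i> * complex_of_real \<alpha>))) = Ep \<alpha>" using c1(1) by simp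
  show ?thesis using assms
    by (simp add: ctrans_def rot_carrier[THEN carrier_matD(1)] rot_carrier[THEN carrier_matD(2)]
      rot_col c1 c2)
qed

lemma LM:
  assumes "1 \<le> i" "i < j" "j \<le> n" "X \<in> carrier_mat n m" "a < n" "b < m"
  shows "(ctrans (rot n i j \<phi> \<alpha>) * X) $$ (a, b) =
    (if a = i - 1 then Cc \<phi> * X $$ (i - 1, b) + Ep \<alpha> * Ss \<phi> * X $$ (j - 1, b)
     else if a = j - 1 then - Em \<alpha> * Ss \<phi> * X $$ (i - 1, b) + Cc \<phi> * X $$ (j - 1, b)
     else X $$ (a, b))"
proof -
  have e: "(ctrans (rot n i j \<phi> \<alpha>) * X) $$ (a, b) = (\<Sum>k<n. ctrans (rot n i j \<phi> \<alpha>) $$ (a, k) * X $$ (k, b))"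
    using assms by (intro mult_entry[OF ctrans_carrier[OF rot_carrier] assms(4)]) auto
  have ne: "i - 1 \<noteq> j - 1" "i - 1 < n" "j - 1 < n" using assms by auto
  show ?thesis
  proof (cases "a = i - 1")
    case True
    have "(\<Sum>k<n. ctrans (rot n i j \<phi> \<alpha>) $$ (a, k) * X $$ (k, b)) = (\<Sum>k<n.
      (if k = i - 1 then Cc \<phi> else if k = j - 1 then Ep \<alpha> * Ss \<phi> else 0) * X $$ (k, b))"
      using assms True by (intro sum.cong refl) (simp add: ctrans_rot)
    then show ?thesis using e True sum_two'[OF ne(2,3,1)] by simp
  next
    case F1: False
    show ?thesis
    proof (cases "a = j - 1")
      case True
      have "(\<Sum>k<n. ctrans (rot n i j \<phi> \<alpha>) $$ (a, k) * X $$ (k, b)) = (\<Sum>k<n.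
        (if k = i - 1 then - Em \<alpha> * Ss \<phi> else if k = j - 1 then Cc \<phi> else 0) * X $$ (k, b))"
        using assms True F1 by (intro sum.cong refl) (simp add: ctrans_rot)
      then show ?thesis using e True F1 sum_two'[OF ne(2,3,1)] by simp
    next
      case False
      have "(\<Sum>k<n. ctrans (rot n i j \<phi> \<alpha>) $$ (a, k) * X $$ (k, b)) = (\<Sum>k<n.
        (if a = k then 1 else 0) * X $$ (k, b))"
        using assms False F1 by (intro sum.cong refl) (simp add: ctrans_rot)
      then show ?thesis using e False F1 sum_one'[OF assms(5)] by simp
    qed
  qed
qed


definition srcs :: "nat \<Rightarrow> nat \<Rightarrow> real \<Rightarrow> real \<Rightarrow> nat \<times> nat \<Rightarrow> (nat \<times> nat) \<times> complex \<times> (nat \<times> nat) \<times> complex" where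
 "srcs i j \<phi> \<alpha> x = (let s = fst x; t = snd x in
   if x = (i,j) \<or> x = (j,i) then (x,0,x,0)
   else if t = i then ((s,i), Cc \<phi>, (s,j), Em \<alpha> * Ss \<phi>)
   else if t = j then ((s,i), - Ep \<alpha> * Ss \<phi>, (s,j), Cc \<phi>)
   else if s = i then ((i,t), Cc \<phi>, (j,t), Ep \<alpha> * Ss \<phi>)
   else if s = j then ((i,t), - Em \<alpha> * Ss \<phi>, (j,t), Cc \<phi>)
   else (x,1,x,0))"

definition "y1 i j \<phi> \<alpha> x = fst (srcs i j \<phi> \<alpha> x)"
definition "d1 i j \<phi> \<alpha> x = fst (snd (srcs i j \<phi> \<alpha> x))"
definition "y2 i j \<phi> \<alpha> x = fst (snd (snd (srcs i j \<phi> \<alpha> x)))"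
definition "d2 i j \<phi> \<alpha> x = snd (snd (snd (srcs i j \<phi> \<alpha> x)))"

lemma B_entry:
  assumes "1 \<le> i" "i < j" "j \<le> n" "A \<in> carrier_mat n n" "valid n (s,t)"
  shows "ent (nu i j (ctrans (rot n i j \<phi> \<alpha>) * A * rot n i j \<phi> \<alpha>)) s t =
    d1 i j \<phi> \<alpha> (s,t) * ent A (fst (y1 i j \<phi> \<alpha> (s,t))) (snd (y1 i j \<phi> \<alpha> (s,t)))
  + d2 i j \<phi> \<alpha> (s,t) * ent A (fst (y2 i j \<phi> \<alpha> (s,t))) (snd (y2 i j \<phi> \<alpha> (s,t)))"
proof -
  have CA: "ctrans (rot n i j \<phi> \<alpha>) * A \<in> carrier_mat n n"
    using ctrans_carrier[OF rot_carrier] assms(4) by (rule mult_carrier_mat)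
  have v: "1 \<le> s" "s \<le> n" "1 \<le> t" "t \<le> n" "s \<noteq> t" using assms(5) by (auto simp: valid_def)
  have dims: "dim_row (ctrans (rot n i j \<phi> \<alpha>) * A * rot n i j \<phi> \<alpha>) = n"
     "dim_col (ctrans (rot n i j \<phi> \<alpha>) * A * rot n i j \<phi> \<alpha>) = n"
    using CA by (auto simp: rot_def)
  have nu1: "ent (nu i j (ctrans (rot n i j \<phi> \<alpha>) * A * rot n i j \<phi> \<alpha>)) s t =
     (if (s = i \<and> t = j) \<or> (s = j \<and> t = i) then 0 else
      (ctrans (rot n i j \<phi> \<alpha>) * A * rot n i j \<phi> \<alpha>) $$ (s - 1, t - 1))"
    using v dims by (simp add: nu_def ent_def)
  have ij: "i - 1 < n" "j - 1 < n" "s - 1 < n" "t - 1 < n" using assms v by auto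
  note LMs = LM[OF assms(1,2,3,4) ij(3) ij(1)] LM[OF assms(1,2,3,4) ij(3) ij(2)]
     LM[OF assms(1,2,3,4) ij(3) ij(4)]
  note RM' = RM[OF assms(1,2,3) CA ij(3) ij(4)]
  have eqs: "(s - 1 = i - 1) = (s = i)" "(s - 1 = j - 1) = (s = j)" "(t - 1 = i - 1) = (t = i)"
    "(t - 1 = j - 1) = (t = j)" "(i - 1 = j - 1) = False" "(j - 1 = i - 1) = False"
    using v assms(1,2) by auto
  consider "(s = i \<and> t = j) \<or> (s = j \<and> t = i)" | "t = i" "s \<noteq> j" | "t = j" "s \<noteq> i"
    | "s = i" "t \<noteq> j" "t \<noteq> i" | "s = j" "t \<noteq> j" "t \<noteq> i" | "s \<noteq> i" "s \<noteq> j" "t \<noteq> i" "t \<noteq> j"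
    using v by blast
  then show ?thesis
  proof cases
    case 1 then show ?thesis using v
      by (auto simp add: nu1 srcs_def y1_def y2_def d1_def d2_def)
  next
    case 2 then show ?thesis unfolding nu1 RM' LMs eqs using v assms(1,2)
      by (simp add: srcs_def y1_def y2_def d1_def d2_def ent_def Let_def)
  next
    case 3 then show ?thesis unfolding nu1 RM' LMs eqs using v assms(1,2)
      by (simp add: srcs_def y1_def y2_def d1_def d2_def ent_def Let_def)
  next
    case 4 then show ?thesis unfolding nu1 RM' LMs eqs using v assms(1,2)
      by (simp add: srcs_def y1_def y2_def d1_def d2_def ent_def Let_def)
  next
    case 5 then show ?thesis unfolding nu1 RM' LMs eqs using v assms(1,2)
      by (simp add: srcs_def y1_def y2_def d1_def d2_def ent_def Let_def)
  next
    case 6 then show ?thesis unfolding nu1 RM' LMs eqs using v assms(1,2)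
      by (simp add: srcs_def y1_def y2_def d1_def d2_def ent_def Let_def)
  qed
qed


definition Mx :: "nat \<Rightarrow> nat \<Rightarrow> nat \<Rightarrow> real \<Rightarrow> real \<Rightarrow> complex mat" where
 "Mx n i j \<phi> \<alpha> = mat (2 * Nn n) (2 * Nn n) (\<lambda>(p,q).
    (if pos n q = y1 i j \<phi> \<alpha> (pos n p) then d1 i j \<phi> \<alpha> (pos n p) else 0)
  + (if pos n q = y2 i j \<phi> \<alpha> (pos n p) then d2 i j \<phi> \<alpha> (pos n p) else 0))"

lemma y_valid:
  assumes "1 \<le> i" "i < j" "j \<le> n" "valid n x"
  shows "valid n (y1 i j \<phi> \<alpha> x) \<and> valid n (y2 i j \<phi> \<alpha> x)"
  using assms by (cases x) (auto simp: srcs_def y1_def y2_def valid_def Let_def)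

lemma pos_eq_iff:
  assumes "q < 2 * Nn n" "valid n y"
  shows "(pos n q = y) = (q = tau n (fst y) (snd y) - 1)"
  using pos_props[OF assms(1)] pos_tau[of n "fst y" "snd y"] assms(2) by auto

lemma ve_tau': "valid n y \<Longrightarrow> ve n A $ (tau n (fst y) (snd y) - 1) = ent A (fst y) (snd y)"
  using ve_tau[of n "fst y" "snd y" A] by simp

lemma sum_pos:
  fixes d :: complex and f :: "nat \<Rightarrow> complex"
  assumes "valid n y"
  shows "(\<Sum>q<2 * Nn n. (if pos n q = y then d else 0) * f q) = d * f (tau n (fst y) (snd y) - 1)"
proof -
  have "(\<Sum>q<2 * Nn n. (if pos n q = y then d else 0) * f q) =
        (\<Sum>q<2 * Nn n. if q = tau n (fst y) (snd y) - 1 then d * f q else 0)"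
    using assms by (intro sum.cong refl) (simp add: pos_eq_iff)
  moreover have "tau n (fst y) (snd y) - 1 < 2 * Nn n"
    using tau_range[of n "fst y" "snd y"] assms by simp linarith
  ultimately show ?thesis by (simp add: sum.delta)
qed

lemma M_works:
  assumes "1 \<le> i" "i < j" "j \<le> n" "A \<in> carrier_mat n n"
  shows "Mx n i j \<phi> \<alpha> *\<^sub>v ve n A = ve n (nu i j (ctrans (rot n i j \<phi> \<alpha>) * A * rot n i j \<phi> \<alpha>))"
proof (rule eq_vecI)
  show "dim_vec (Mx n i j \<phi> \<alpha> *\<^sub>v ve n A) =
      dim_vec (ve n (nu i j (ctrans (rot n i j \<phi> \<alpha>) * A * rot n i j \<phi> \<alpha>)))"
    by (simp add: Mx_def)
  fix p assume "p < dim_vec (ve n (nu i j (ctrans (rot n i j \<phi> \<alpha>) * A * rot n i j \<phi> \<alpha>)))"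
  then have p: "p < 2 * Nn n" by simp
  define x where "x = pos n p"
  have vx: "valid n x" using pos_props[OF p] x_def by simp
  have vy: "valid n (y1 i j \<phi> \<alpha> x)" "valid n (y2 i j \<phi> \<alpha> x)"
    using y_valid[OF assms(1,2,3) vx] by auto
  have "(Mx n i j \<phi> \<alpha> *\<^sub>v ve n A) $ p = (\<Sum>q<2 * Nn n. Mx n i j \<phi> \<alpha> $$ (p, q) * ve n A $ q)"
    using p by (simp add: Mx_def scalar_prod_def lessThan_atLeast0)
  also have "\<dots> = (\<Sum>q<2 * Nn n. (if pos n q = y1 i j \<phi> \<alpha> x then d1 i j \<phi> \<alpha> x else 0) * ve n A $ q
                  + (if pos n q = y2 i j \<phi> \<alpha> x then d2 i j \<phi> \<alpha> x else 0) * ve n A $ q)"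
    using p by (intro sum.cong refl) (simp add: Mx_def x_def distrib_right)
  also have "\<dots> = d1 i j \<phi> \<alpha> x * ent A (fst (y1 i j \<phi> \<alpha> x)) (snd (y1 i j \<phi> \<alpha> x))
                + d2 i j \<phi> \<alpha> x * ent A (fst (y2 i j \<phi> \<alpha> x)) (snd (y2 i j \<phi> \<alpha> x))"
    using vy ve_tau'[OF vy(1)] ve_tau'[OF vy(2)] by (simp add: sum.distrib sum_pos)
  also have "\<dots> = ent (nu i j (ctrans (rot n i j \<phi> \<alpha>) * A * rot n i j \<phi> \<alpha>)) (fst x) (snd x)"
    using B_entry[OF assms, of "fst x" "snd x" \<phi> \<alpha>] vx by simp
  also have "\<dots> = ve n (nu i j (ctrans (rot n i j \<phi> \<alpha>) * A * rot n i j \<phi> \<alpha>)) $ p"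
    using ve_pos[OF p] x_def by simp
  finally show "(Mx n i j \<phi> \<alpha> *\<^sub>v ve n A) $ p = ve n (nu i j (ctrans (rot n i j \<phi> \<alpha>) * A * rot n i j \<phi> \<alpha>)) $ p" .
qed

lemma pos_inj: "p < 2 * Nn n \<Longrightarrow> q < 2 * Nn n \<Longrightarrow> pos n p = pos n q \<Longrightarrow> p = q"
  using pos_props[of p n] pos_props[of q n] by metis

lemma ve_unit:
  assumes q: "q < 2 * Nn n"
  shows "\<exists>A \<in> carrier_mat n n. ve n A = unit_vec (2 * Nn n) q"
proof
  define A where "A = mat n n (\<lambda>(a,b). if (a + 1, b + 1) = pos n q then (1::complex) else 0)"
  show "A \<in> carrier_mat n n" by (simp add: A_def)
  show "ve n A = unit_vec (2 * Nn n) q"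
  proof (rule eq_vecI)
    fix p assume "p < dim_vec (unit_vec (2 * Nn n) q)"
    then have p: "p < 2 * Nn n" by simp
    have v: "valid n (pos n p)" using pos_props[OF p] by simp
    have vq: "valid n (pos n q)" using pos_props[OF q] by simp
    obtain a b where ab: "pos n p = (a,b)" by (cases "pos n p")
    obtain c d where cd: "pos n q = (c,d)" by (cases "pos n q")
    have r: "1 \<le> a" "a \<le> n" "1 \<le> b" "b \<le> n" using v ab by (auto simp: valid_def)
    have "ve n A $ p = A $$ (a - 1, b - 1)" unfolding ve_pos[OF p] ab by (simp add: ent_def)
    also have "\<dots> = (if (a, b) = (c, d) then 1 else 0)" using r unfolding A_def cd by auto
    finally have "ve n A $ p = (if pos n p = pos n q then 1 else 0)" using ab cd by simp
    also have "\<dots> = (if p = q then 1 else 0)" using pos_inj[OF p q] by auto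
    finally show "ve n A $ p = unit_vec (2 * Nn n) q $ p" using p q by simp
  qed simp
qed

lemma mat_unique:
  assumes "M1 \<in> carrier_mat (2 * Nn n) (2 * Nn n)" "M2 \<in> carrier_mat (2 * Nn n) (2 * Nn n)"
    "\<And>A. A \<in> carrier_mat n n \<Longrightarrow> M1 *\<^sub>v ve n A = M2 *\<^sub>v ve n A"
  shows "M1 = M2"
proof (rule eq_matI)
  fix p q assume pq: "p < dim_row M2" "q < dim_col M2"
  obtain A where A: "A \<in> carrier_mat n n" "ve n A = unit_vec (2 * Nn n) q"
    using ve_unit[of q n] pq assms(2) by auto
  have "M1 $$ (p, q) = (M1 *\<^sub>v unit_vec (2 * Nn n) q) $ p"
    using pq assms by simp
  also have "\<dots> = (M2 *\<^sub>v unit_vec (2 * Nn n) q) $ p" using assms(3)[OF A(1)] A(2) by simp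
  also have "\<dots> = M2 $$ (p, q)" using pq assms by simp
  finally show "M1 $$ (p, q) = M2 $$ (p, q)" .
qed (use assms in auto)

lemma R_eq:
  assumes "1 \<le> i" "i < j" "j \<le> n"
  shows "jacobi_annihilator n i j (rot n i j \<phi> \<alpha>) = Mx n i j \<phi> \<alpha>"
  unfolding jacobi_annihilator_def
proof (rule the_equality)
  show "Mx n i j \<phi> \<alpha> \<in> carrier_mat (2 * Nn n) (2 * Nn n) \<and>
    (\<forall>A\<in>carrier_mat n n. Mx n i j \<phi> \<alpha> *\<^sub>v ve n A = ve n (nu i j (ctrans (rot n i j \<phi> \<alpha>) * A * rot n i j \<phi> \<alpha>)))"
    using M_works[OF assms] by (simp add: Mx_def)
  fix M assume "M \<in> carrier_mat (2 * Nn n) (2 * Nn n) \<and>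
    (\<forall>A\<in>carrier_mat n n. M *\<^sub>v ve n A = ve n (nu i j (ctrans (rot n i j \<phi> \<alpha>) * A * rot n i j \<phi> \<alpha>)))"
  then show "M = Mx n i j \<phi> \<alpha>"
    using M_works[OF assms] by (intro mat_unique[of M n]) (auto simp: Mx_def)
qed

lemma R_ent:
  assumes "valid n x" "valid n y"
  shows "ent (Mx n i j \<phi> \<alpha>) (tau n (fst x) (snd x)) (tau n (fst y) (snd y)) =
    (if y = y1 i j \<phi> \<alpha> x then d1 i j \<phi> \<alpha> x else 0) + (if y = y2 i j \<phi> \<alpha> x then d2 i j \<phi> \<alpha> x else 0)"
proof -
  have "tau n (fst x) (snd x) - 1 < 2 * Nn n" "tau n (fst y) (snd y) - 1 < 2 * Nn n"
    using tau_range[of n "fst x" "snd x"] tau_range[of n "fst y" "snd y"] assms by (simp; linarith)+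
  then show ?thesis using assms pos_tau[of n "fst x" "snd x"] pos_tau[of n "fst y" "snd y"]
    by (simp add: ent_def Mx_def)
qed


lemma two_ne_single: "(x::'a) \<noteq> y \<Longrightarrow> {x, y} \<noteq> {a}"
  by (metis insertI1 insert_commute singletonD)

definition Bset :: "nat \<Rightarrow> nat \<Rightarrow> nat \<Rightarrow> nat set set" where
  "Bset n i j = {{tau n i j}, {tau n j i}}
               \<union> {{tau n r i, tau n r j} | r. r \<in> {1..n} - {i, j}}
               \<union> {{tau n i r, tau n j r} | r. r \<in> {1..n} - {i, j}}"

lemma offblock:
  assumes ij: "1 \<le> i" "i < j" "j \<le> n" and vx: "valid n x" and vy: "valid n y"
    and H: "\<And>b. b \<in> Bset n i j \<Longrightarrow> (tau n (fst x) (snd x), tau n (fst y) (snd y)) \<notin> b \<times> b"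
  shows "(if y = y1 i j \<phi> \<alpha> x then d1 i j \<phi> \<alpha> x else 0) + (if y = y2 i j \<phi> \<alpha> x then d2 i j \<phi> \<alpha> x else 0)
     = (if x = y then 1 else 0)"
proof -
  obtain s t where x: "x = (s,t)" by (cases x)
  have v: "1 \<le> s" "s \<le> n" "1 \<le> t" "t \<le> n" "s \<noteq> t" using vx x by (auto simp: valid_def)
  consider "(s = i \<and> t = j) \<or> (s = j \<and> t = i)" | "t = i" "s \<noteq> j" | "t = j" "s \<noteq> i"
    | "s = i" "t \<noteq> j" "t \<noteq> i" | "s = j" "t \<noteq> j" "t \<noteq> i" | "s \<noteq> i" "s \<noteq> j" "t \<noteq> i" "t \<noteq> j"
    using v by blast
  then show ?thesis
  proof cases
    case 1
    then have "{tau n s t} \<in> Bset n i j" by (auto simp: Bset_def)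
    then have "x \<noteq> y" using H x by fastforce
    then show ?thesis using 1 x by (auto simp: srcs_def y1_def y2_def d1_def d2_def)
  next
    case 2
    then have "{tau n s i, tau n s j} \<in> Bset n i j" using v ij by (auto simp: Bset_def)
    then have "y \<noteq> (s,i)" "y \<noteq> (s,j)" using H x 2 by fastforce+
    then show ?thesis using 2 x v by (auto simp: srcs_def y1_def y2_def d1_def d2_def Let_def)
  next
    case 3
    then have "{tau n s i, tau n s j} \<in> Bset n i j" using v ij by (auto simp: Bset_def)
    then have "y \<noteq> (s,i)" "y \<noteq> (s,j)" using H x 3 by fastforce+
    then show ?thesis using 3 x v by (auto simp: srcs_def y1_def y2_def d1_def d2_def Let_def)
  next
    case 4
    then have "{tau n i t, tau n j t} \<in> Bset n i j" using v ij by (auto simp: Bset_def)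
    then have "y \<noteq> (i,t)" "y \<noteq> (j,t)" using H x 4 by fastforce+
    then show ?thesis using 4 x v by (auto simp: srcs_def y1_def y2_def d1_def d2_def Let_def)
  next
    case 5
    then have "{tau n i t, tau n j t} \<in> Bset n i j" using v ij by (auto simp: Bset_def)
    then have "y \<noteq> (i,t)" "y \<noteq> (j,t)" using H x 5 by fastforce+
    then show ?thesis using 5 x v by (auto simp: srcs_def y1_def y2_def d1_def d2_def Let_def)
  next
    case 6
    then show ?thesis using x by (auto simp: srcs_def y1_def y2_def d1_def d2_def Let_def)
  qed
qed

theorem theorem2p4:
  fixes n i j :: nat and \<phi> \<alpha> :: real
  assumes "n \<ge> 2" and "1 \<le> i" and "i < j" and "j \<le> n"
  defines "U \<equiv> rot n i j \<phi> \<alpha>"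
  defines "R \<equiv> jacobi_annihilator n i j U"
  defines "B \<equiv> {{tau n i j}, {tau n j i}}
               \<union> {{tau n r i, tau n r j} | r. r \<in> {1..n} - {i, j}}
               \<union> {{tau n i r, tau n j r} | r. r \<in> {1..n} - {i, j}}"
  shows "R \<in> carrier_mat (2 * Nn n) (2 * Nn n)
    \<and> card B = 2 * n - 2
    \<and> pairwise disjnt B
    \<and> (\<forall>b \<in> B. b \<subseteq> {1..2 * Nn n})
    \<and> (\<forall>a \<in> {1..2 * Nn n}. \<forall>c \<in> {1..2 * Nn n}.
         (\<forall>b \<in> B. (a, c) \<notin> b \<times> b) \<longrightarrow> ent R a c = (if a = c then 1 else 0))
    \<and> ent R (tau n i j) (tau n i j) = 0
    \<and> ent R (tau n j i) (tau n j i) = 0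
    \<and> (\<forall>r \<in> {1..n} - {i, j}.
         ent R (tau n r i) (tau n r i) = complex_of_real (cos \<phi>)
       \<and> ent R (tau n r i) (tau n r j) = exp (- \<i> * complex_of_real \<alpha>) * complex_of_real (sin \<phi>)
       \<and> ent R (tau n r j) (tau n r i) = - exp (\<i> * complex_of_real \<alpha>) * complex_of_real (sin \<phi>)
       \<and> ent R (tau n r j) (tau n r j) = complex_of_real (cos \<phi>)
       \<and> ent R (tau n i r) (tau n i r) = complex_of_real (cos \<phi>)
       \<and> ent R (tau n i r) (tau n j r) = exp (\<i> * complex_of_real \<alpha>) * complex_of_real (sin \<phi>)
       \<and> ent R (tau n j r) (tau n i r) = - exp (- \<i> * complex_of_real \<alpha>) * complex_of_real (sin \<phi>)
       \<and> ent R (tau n j r) (tau n j r) = complex_of_real (cos \<phi>))"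
proof -
  have ij: "1 \<le> i" "i < j" "j \<le> n" using assms by auto
  have RM: "R = Mx n i j \<phi> \<alpha>" unfolding R_def U_def using R_eq[OF ij] .
  have BB: "B = Bset n i j" unfolding B_def Bset_def ..
  define S where "S = {1..n} - {i, j}"
  have vS: "valid n (r,i) \<and> valid n (r,j) \<and> valid n (i,r) \<and> valid n (j,r)" if "r \<in> S" for r
    using that ij by (auto simp: S_def valid_def)
  have vij: "valid n (i,j)" "valid n (j,i)" using ij by (auto simp: valid_def)
  have Beq: "B = {{tau n i j}, {tau n j i}} \<union> (\<lambda>r. {tau n r i, tau n r j}) ` S
      \<union> (\<lambda>r. {tau n i r, tau n j r}) ` S"
    unfolding B_def S_def by blast
  have RE: "ent R (tau n (fst x) (snd x)) (tau n (fst y) (snd y)) =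
    (if y = y1 i j \<phi> \<alpha> x then d1 i j \<phi> \<alpha> x else 0) + (if y = y2 i j \<phi> \<alpha> x then d2 i j \<phi> \<alpha> x else 0)"
    if "valid n x" "valid n y" for x y
    unfolding RM using R_ent[OF that] .
  have P1: "R \<in> carrier_mat (2 * Nn n) (2 * Nn n)" by (simp add: RM Mx_def)
  have tinj: "\<And>x y. valid n x \<Longrightarrow> valid n y \<Longrightarrow>
      (tau n (fst x) (snd x) = tau n (fst y) (snd y)) = (x = y)"
    using tau_inj by (metis prod.collapse)
  have t_ij: "tau n i j \<noteq> tau n j i" using tinj[OF vij] ij by auto
  have injf: "inj_on (\<lambda>r. {tau n r i, tau n r j}) S"
  proof (rule inj_onI)
    fix r r' assume r: "r \<in> S" "r' \<in> S" and e: "{tau n r i, tau n r j} = {tau n r' i, tau n r' j}"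
    then have "tau n r i = tau n r' i \<or> tau n r i = tau n r' j" by blast
    then show "r = r'" using tinj[of "(r,i)" "(r',i)"] tinj[of "(r,i)" "(r',j)"] vS r ij by auto
  qed
  have injg: "inj_on (\<lambda>r. {tau n i r, tau n j r}) S"
  proof (rule inj_onI)
    fix r r' assume r: "r \<in> S" "r' \<in> S" and e: "{tau n i r, tau n j r} = {tau n i r', tau n j r'}"
    then have "tau n i r = tau n i r' \<or> tau n i r = tau n j r'" by blast
    then show "r = r'" using tinj[of "(i,r)" "(i,r')"] tinj[of "(i,r)" "(j,r')"] vS r ij by auto
  qed
  have twoel: "tau n r i \<noteq> tau n r j" "tau n i r \<noteq> tau n j r" if "r \<in> S" for r
    using tinj[of "(r,i)" "(r,j)"] tinj[of "(i,r)" "(j,r)"] vS[OF that] ij by auto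
  have d1: "{{tau n i j}, {tau n j i}} \<inter> ((\<lambda>r. {tau n r i, tau n r j}) ` S \<union> (\<lambda>r. {tau n i r, tau n j r}) ` S) = {}"
  proof -
    have "\<And>r a. r \<in> S \<Longrightarrow> {tau n r i, tau n r j} \<noteq> {a}" "\<And>r a. r \<in> S \<Longrightarrow> {tau n i r, tau n j r} \<noteq> {a}"
      using twoel two_ne_single by metis+
    then show ?thesis by blast
  qed
  have d2: "(\<lambda>r. {tau n r i, tau n r j}) ` S \<inter> (\<lambda>r. {tau n i r, tau n j r}) ` S = {}"
  proof -
    have "tau n r i \<noteq> tau n i r'" "tau n r i \<noteq> tau n j r'" if "r \<in> S" "r' \<in> S" for r r'
      using tinj[of "(r,i)" "(i,r')"] tinj[of "(r,i)" "(j,r')"] vS[OF that(1)] vS[OF that(2)] that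
      by (auto simp: S_def)
    then show ?thesis by blast
  qed
  have cS: "card S = n - 2" using ij unfolding S_def by (subst card_Diff_subset) auto
  have P2: "card B = 2 * n - 2"
  proof -
    have "card B = card {{tau n i j}, {tau n j i}} + card ((\<lambda>r. {tau n r i, tau n r j}) ` S \<union> (\<lambda>r. {tau n i r, tau n j r}) ` S)"
      unfolding Beq Un_assoc by (rule card_Un_disjoint) (use d1 S_def in auto)
    also have "card ((\<lambda>r. {tau n r i, tau n r j}) ` S \<union> (\<lambda>r. {tau n i r, tau n j r}) ` S) = (n - 2) + (n - 2)"
      by (subst card_Un_disjoint) (use d2 S_def card_image[OF injf] card_image[OF injg] cS in auto)
    also have "card {{tau n i j}, {tau n j i}} = 2" using t_ij by simp
    finally show ?thesis using assms(1) by simp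
  qed
  have P3: "pairwise disjnt B"
  proof (unfold pairwise_def, intro ballI impI)
    fix b b' assume bb: "b \<in> B" "b' \<in> B" "b \<noteq> b'"
    show "disjnt b b'"
    proof (rule ccontr)
      assume "\<not> disjnt b b'"
      then obtain z where z: "z \<in> b" "z \<in> b'" by (auto simp: disjnt_def)
      have mem: "\<exists>x. valid n x \<and> z = tau n (fst x) (snd x) \<and> b = (if fst x = i \<and> snd x = j \<or> fst x = j \<and> snd x = i then {z}
          else if snd x = i \<or> snd x = j then {tau n (fst x) i, tau n (fst x) j} else {tau n i (snd x), tau n j (snd x)})"
        if "b \<in> B" "z \<in> b" for b
      proof -
        from that(1) consider "b = {tau n i j}" | "b = {tau n j i}"
          | r where "r \<in> S" "b = {tau n r i, tau n r j}" | r where "r \<in> S" "b = {tau n i r, tau n j r}"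
          unfolding Beq by blast
        then show ?thesis
        proof cases
          case 1 then show ?thesis using that(2) vij ij by (intro exI[of _ "(i,j)"]) auto
        next
          case 2 then show ?thesis using that(2) vij ij by (intro exI[of _ "(j,i)"]) auto
        next
          case (3 r)
          then have rr: "r \<noteq> i" "r \<noteq> j" by (auto simp: S_def)
          from 3 that(2) have "z = tau n r i \<or> z = tau n r j" by blast
          then show ?thesis
          proof
            assume "z = tau n r i" then show ?thesis using 3 vS[OF 3(1)] rr
              by (intro exI[of _ "(r,i)"]) auto
          next
            assume "z = tau n r j" then show ?thesis using 3 vS[OF 3(1)] rr
              by (intro exI[of _ "(r,j)"]) auto
          qed
        next
          case (4 r)
          then have rr: "r \<noteq> i" "r \<noteq> j" by (auto simp: S_def)
          from 4 that(2) have "z = tau n i r \<or> z = tau n j r" by blast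
          then show ?thesis
          proof
            assume "z = tau n i r" then show ?thesis using 4 vS[OF 4(1)] rr ij
              by (intro exI[of _ "(i,r)"]) auto
          next
            assume "z = tau n j r" then show ?thesis using 4 vS[OF 4(1)] rr ij
              by (intro exI[of _ "(j,r)"]) auto
          qed
        qed
      qed
      obtain x where x: "valid n x" "z = tau n (fst x) (snd x)" "b = (if fst x = i \<and> snd x = j \<or> fst x = j \<and> snd x = i then {z}
          else if snd x = i \<or> snd x = j then {tau n (fst x) i, tau n (fst x) j} else {tau n i (snd x), tau n j (snd x)})"
        using mem[OF bb(1) z(1)] by blast
      obtain x' where x': "valid n x'" "z = tau n (fst x') (snd x')" "b' = (if fst x' = i \<and> snd x' = j \<or> fst x' = j \<and> snd x' = i then {z}
          else if snd x' = i \<or> snd x' = j then {tau n (fst x') i, tau n (fst x') j} else {tau n i (snd x'), tau n j (snd x')})"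
        using mem[OF bb(2) z(2)] by blast
      have "x = x'" using tinj[OF x(1) x'(1)] x(2) x'(2) by simp
      then have "b = b'" unfolding x(3) x'(3) by simp
      then show False using bb(3) by simp
    qed
  qed
  have P4: "\<forall>b \<in> B. b \<subseteq> {1..2 * Nn n}"
  proof -
    have tr: "tau n s t \<in> {1..2 * Nn n}" if "valid n (s,t)" for s t using tau_range[OF that] by simp
    have trS: "tau n r i \<in> {1..2 * Nn n} \<and> tau n r j \<in> {1..2 * Nn n} \<and> tau n i r \<in> {1..2 * Nn n}
       \<and> tau n j r \<in> {1..2 * Nn n}" if "r \<in> S" for r using vS[OF that] tr by blast
    show ?thesis unfolding Beq using trS tr[OF vij(1)] tr[OF vij(2)] by blast
  qed
  have P5: "\<forall>a \<in> {1..2 * Nn n}. \<forall>c \<in> {1..2 * Nn n}.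
         (\<forall>b \<in> B. (a, c) \<notin> b \<times> b) \<longrightarrow> ent R a c = (if a = c then 1 else 0)"
  proof (intro ballI impI)
    fix a c assume a: "a \<in> {1..2 * Nn n}" and c: "c \<in> {1..2 * Nn n}" and H: "\<forall>b \<in> B. (a, c) \<notin> b \<times> b"
    have pa: "a - 1 < 2 * Nn n" "c - 1 < 2 * Nn n" using a c by auto
    define x where "x = pos n (a - 1)"
    define y where "y = pos n (c - 1)"
    have vx: "valid n x" using pos_props[OF pa(1)] unfolding x_def by simp
    have "1 \<le> tau n (fst x) (snd x)" using tau_range[of n "fst x" "snd x"] vx by simp
    moreover have "a - 1 = tau n (fst x) (snd x) - 1" using pos_props[OF pa(1)] unfolding x_def by simp
    moreover have "1 \<le> a" using a by simp
    ultimately have ax: "a = tau n (fst x) (snd x)" by linarith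
    have vy: "valid n y" using pos_props[OF pa(2)] unfolding y_def by simp
    have "1 \<le> tau n (fst y) (snd y)" using tau_range[of n "fst y" "snd y"] vy by simp
    moreover have "c - 1 = tau n (fst y) (snd y) - 1" using pos_props[OF pa(2)] unfolding y_def by simp
    moreover have "1 \<le> c" using c by simp
    ultimately have cy: "c = tau n (fst y) (snd y)" by linarith
    have "ent R a c = (if y = y1 i j \<phi> \<alpha> x then d1 i j \<phi> \<alpha> x else 0) + (if y = y2 i j \<phi> \<alpha> x then d2 i j \<phi> \<alpha> x else 0)"
      using RE[OF vx vy] ax cy by simp
    also have "\<dots> = (if x = y then 1 else 0)"
      by (rule offblock[OF ij vx vy]) (use H ax cy BB in auto)
    also have "(x = y) = (a = c)" using tinj[OF vx vy] ax cy by simp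
    finally show "ent R a c = (if a = c then 1 else 0)" .
  qed
  have P6: "ent R (tau n i j) (tau n i j) = 0" "ent R (tau n j i) (tau n j i) = 0"
    using RE[OF vij(1) vij(1)] RE[OF vij(2) vij(2)]
    by (simp_all add: srcs_def y1_def y2_def d1_def d2_def)
  have P7: "ent R (tau n r i) (tau n r i) = complex_of_real (cos \<phi>)
       \<and> ent R (tau n r i) (tau n r j) = exp (- \<i> * complex_of_real \<alpha>) * complex_of_real (sin \<phi>)
       \<and> ent R (tau n r j) (tau n r i) = - exp (\<i> * complex_of_real \<alpha>) * complex_of_real (sin \<phi>)
       \<and> ent R (tau n r j) (tau n r j) = complex_of_real (cos \<phi>)
       \<and> ent R (tau n i r) (tau n i r) = complex_of_real (cos \<phi>)
       \<and> ent R (tau n i r) (tau n j r) = exp (\<i> * complex_of_real \<alpha>) * complex_of_real (sin \<phi>)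
       \<and> ent R (tau n j r) (tau n i r) = - exp (- \<i> * complex_of_real \<alpha>) * complex_of_real (sin \<phi>)
       \<and> ent R (tau n j r) (tau n j r) = complex_of_real (cos \<phi>)" if r: "r \<in> {1..n} - {i, j}" for r
  proof -
    have rS: "r \<in> S" using r S_def by simp
    have rr: "r \<noteq> i" "r \<noteq> j" using r by auto
    note v = vS[OF rS]
    show ?thesis
      using RE[of "(r,i)" "(r,i)"] RE[of "(r,i)" "(r,j)"] RE[of "(r,j)" "(r,i)"] RE[of "(r,j)" "(r,j)"]
        RE[of "(i,r)" "(i,r)"] RE[of "(i,r)" "(j,r)"] RE[of "(j,r)" "(i,r)"] RE[of "(j,r)" "(j,r)"]
        v rr ij
      by (simp add: srcs_def y1_def y2_def d1_def d2_def Let_def)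
  qed
  show ?thesis using P1 P2 P3 P4 P5 P6 P7 by blast
qed

end
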